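(* Let $T\in\mathcal B(\mathcal H)$. The function $\Psi_T^{-1}(z)=\|(T-z)^{-1}\|$ is semiconvex on the open set $\mathbb C\setminus\sigma(T)$ with bound function $C(z)=2\Psi_T(z)^{-3}$. That is, for every compact convex set $B\subset\mathbb C\setminus\sigma(T)$, setting $C'=\max_{z\in B}2\Psi_T(z)^{-3}$, one has $$2\Psi_T^{-1}(\mu)-\Psi_T^{-1}(\mu+\eta)-\Psi_T^{-1}(\mu-\eta)\le C'|\eta|^2$$ for all $\mu,\eta\in\mathbb C$ with $[\mu-\eta,\mu+\eta]\subset B$.
   Context: $\mathcal H$ is a complex Hilbert space. $\Psi_T(z)=\|(T-z)^{-1}\|^{-1}$ for $z\notin\sigma(T)$. Definition: for $A\subset\mathbb R^n$ and continuous $u:A\to\mathbb R$, $u$ is semiconvex with constant $C\ge0$ if $2u(\mu)-u(\mu+\eta)-u(\mu-\eta)\le C|\eta|^2$ whenever the segment $[\mu-\eta,\mu+\eta]\subset A$; for an open set $A$ and positive continuous $C:A\to\mathbb R$, $u$ is semiconvex with bound function $C(x)$ if for every compact convex $B\subset A$ the restriction $u|_B$ is semiconvex with constant $\max_{x\in B}C(x)$. Here $\mathbb C$ is identified with $\mathbb R^2$. *)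

theory Defs
  imports "HOL-Analysis.Analysis"
begin

text \<open>A complex Hilbert space is modelled as a real Hilbert space 'a (real_inner, complete)
together with a complex structure J (multiplication by i): J is real-linear, J (J x) = - x,
and J is orthogonal.\<close>

definition complex_structure :: "('a::real_inner \<Rightarrow> 'a) \<Rightarrow> bool" where
  "complex_structure J \<longleftrightarrow> linear J \<and> (\<forall>x. J (J x) = - x) \<and> (\<forall>x y. inner (J x) (J y) = inner x y)"

definition cscale :: "('a::real_vector \<Rightarrow> 'a) \<Rightarrow> complex \<Rightarrow> 'a \<Rightarrow> 'a" where
  "cscale J z x = Re z *\<^sub>R x + Im z *\<^sub>R J x"

text \<open>Bounded complex-linear operators, i.e. elements of B(H).\<close>
definition cbounded :: "('a::real_normed_vector \<Rightarrow> 'a) \<Rightarrow> ('a \<Rightarrow> 'a) \<Rightarrow> bool" where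
  "cbounded J T \<longleftrightarrow> bounded_linear T \<and> (\<forall>x. T (J x) = J (T x))"

definition shift_op :: "('a::real_normed_vector \<Rightarrow> 'a) \<Rightarrow> ('a \<Rightarrow> 'a) \<Rightarrow> complex \<Rightarrow> 'a \<Rightarrow> 'a" where
  "shift_op J T z = (\<lambda>x. T x - cscale J z x)"

definition spec :: "('a::real_normed_vector \<Rightarrow> 'a) \<Rightarrow> ('a \<Rightarrow> 'a) \<Rightarrow> complex set" where
  "spec J T = {z. \<not> (\<exists>S. cbounded J S \<and> S \<circ> shift_op J T z = id \<and> shift_op J T z \<circ> S = id)}"

definition res_norm :: "('a::real_normed_vector \<Rightarrow> 'a) \<Rightarrow> ('a \<Rightarrow> 'a) \<Rightarrow> complex \<Rightarrow> real" where
  "res_norm J T z = onorm (inv (shift_op J T z))"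

definition Psi :: "('a::real_normed_vector \<Rightarrow> 'a) \<Rightarrow> ('a \<Rightarrow> 'a) \<Rightarrow> complex \<Rightarrow> real" where
  "Psi J T z = inverse (res_norm J T z)"

definition semiconvex_const :: "complex set \<Rightarrow> (complex \<Rightarrow> real) \<Rightarrow> real \<Rightarrow> bool" where
  "semiconvex_const A u C \<longleftrightarrow>
     (\<forall>\<mu> \<eta>. closed_segment (\<mu> - \<eta>) (\<mu> + \<eta>) \<subseteq> A \<longrightarrow>
        2 * u \<mu> - u (\<mu> + \<eta>) - u (\<mu> - \<eta>) \<le> C * (cmod \<eta>)\<^sup>2)"

definition semiconvex_bound :: "complex set \<Rightarrow> (complex \<Rightarrow> real) \<Rightarrow> (complex \<Rightarrow> real) \<Rightarrow> bool" where
  "semiconvex_bound A u Cf \<longleftrightarrow> continuous_on A u \<and>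
     (\<forall>B. compact B \<and> convex B \<and> B \<subseteq> A \<longrightarrow> semiconvex_const B u (Sup (Cf ` B)))"

end

theory Submission
  imports Defs
begin

lemma csD:
  assumes "complex_structure J"
  shows "linear J" "J (J x) = - x" "inner (J x) (J y) = inner x y"
  using assms unfolding complex_structure_def by auto

lemma cscale_diff_z: "cscale J (a - b) x = cscale J a x - cscale J b x"
  by (simp add: cscale_def algebra_simps)

lemma cscale_add_z: "cscale J (a + b) x = cscale J a x + cscale J b x"
  by (simp add: cscale_def algebra_simps)

lemma cscale_mult:
  assumes "complex_structure J"
  shows "cscale J a (cscale J b x) = cscale J (a*b) x"
proof -
  interpret J: linear J using csD(1)[OF assms] .
  show ?thesis
    by (simp add: cscale_def J.add J.scale csD(2)[OF assms] algebra_simps)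
qed

lemma cscale_comm:
  assumes "linear S" "\<And>x. S (J x) = J (S x)"
  shows "S (cscale J c x) = cscale J c (S x)"
proof -
  interpret S: linear S using assms(1) .
  show ?thesis by (simp add: cscale_def S.add S.scale assms(2))
qed

lemma inner_J_self:
  assumes "complex_structure J"
  shows "inner x (J x) = 0"
proof -
  have "inner x (J x) = inner (J x) (J (J x))" using csD(3)[OF assms] by simp
  also have "\<dots> = - inner (J x) x" using csD(2)[OF assms] by simp
  also have "\<dots> = - inner x (J x)" by (simp add: inner_commute)
  finally show ?thesis by simp
qed

lemma norm_cscale:
  assumes "complex_structure J"
  shows "norm (cscale J c x) = cmod c * norm x"
proof -
  have nJ: "inner (J x) (J x) = inner x x" using csD(3)[OF assms] .
  have "(norm (cscale J c x))^2 = (Re c)^2 * (norm x)^2 + (Im c)^2 * (norm x)^2"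
    unfolding cscale_def power2_norm_eq_inner
    using nJ inner_J_self[OF assms, of x]
    by (simp add: inner_add_left inner_add_right inner_commute power2_eq_square algebra_simps)
  also have "\<dots> = (cmod c * norm x)^2"
    by (simp add: cmod_def power_mult_distrib algebra_simps)
  finally show ?thesis
    by (metis norm_ge_zero norm_ge_zero mult_nonneg_nonneg power2_eq_imp_eq)
qed

lemma shift_diff:
  assumes "cbounded J T" "complex_structure J"
  shows "shift_op J T w (a - b) = shift_op J T w a - shift_op J T w b"
proof -
  interpret T: bounded_linear T using assms unfolding cbounded_def by auto
  interpret J: linear J using csD(1)[OF assms(2)] .
  show ?thesis by (simp add: shift_op_def cscale_def T.diff J.diff algebra_simps)
qed

lemma shift_cscale:
  assumes "cbounded J T" "complex_structure J"
  shows "shift_op J T w (cscale J c x) = cscale J c (shift_op J T w x)"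
proof -
  have lT: "linear T" using assms unfolding cbounded_def by (auto intro: bounded_linear.linear)
  have "T (cscale J c x) = cscale J c (T x)"
    by (rule cscale_comm[OF lT]) (use assms in \<open>auto simp: cbounded_def\<close>)
  moreover have "cscale J w (cscale J c x) = cscale J c (cscale J w x)"
    using cscale_mult[OF assms(2)] by (simp add: mult.commute)
  moreover have "cscale J c (a - b) = cscale J c a - cscale J c b" for a b
  proof -
    interpret J: linear J using csD(1)[OF assms(2)] .
    show ?thesis by (simp add: cscale_def J.diff algebra_simps)
  qed
  ultimately show ?thesis by (simp add: shift_op_def)
qed

lemma resolvent:
  assumes "z \<notin> spec J T"
  shows "cbounded J (inv (shift_op J T z)) \<and> inv (shift_op J T z) \<circ> shift_op J T z = id
     \<and> shift_op J T z \<circ> inv (shift_op J T z) = id"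
proof -
  obtain S where S: "cbounded J S" "S \<circ> shift_op J T z = id" "shift_op J T z \<circ> S = id"
    using assms unfolding spec_def by auto
  have "inv (shift_op J T z) = S" by (rule inv_unique_comp) (use S in auto)
  with S show ?thesis by simp
qed

lemma res_id:
  assumes "cbounded J T" "complex_structure J" "z \<notin> spec J T" "w \<notin> spec J T"
  shows "inv (shift_op J T w) x - inv (shift_op J T z) x
       = cscale J (w - z) (inv (shift_op J T w) (inv (shift_op J T z) x))"
proof -
  define L where "L = shift_op J T"
  define Rw where "Rw = inv (L w)"
  define Rz where "Rz = inv (L z)"
  have Rw: "cbounded J Rw" "\<And>v. Rw (L w v) = v" "\<And>v. L w (Rw v) = v"
    using resolvent[OF assms(4)] unfolding Rw_def L_def by (auto simp: fun_eq_iff)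
  have Rz: "\<And>v. L z (Rz v) = v"
    using resolvent[OF assms(3)] unfolding Rz_def L_def by (auto simp: fun_eq_iff)
  have Lwz: "L w v = L z v - cscale J (w - z) v" for v
    by (simp add: L_def shift_op_def cscale_diff_z)
  have "L w (Rw x - Rz x) = cscale J (w - z) (Rz x)"
    using shift_diff[OF assms(1,2)] Rw(3) Lwz Rz unfolding L_def by simp
  also have "\<dots> = L w (cscale J (w - z) (Rw (Rz x)))"
    using shift_cscale[OF assms(1,2)] Rw(3) unfolding L_def by simp
  finally have "Rw (L w (Rw x - Rz x)) = Rw (L w (cscale J (w - z) (Rw (Rz x))))" by simp
  thus ?thesis using Rw(2) unfolding Rw_def Rz_def L_def by simp
qed

lemma norm3: "norm (u + v - w) \<le> norm u + norm v + norm (w::'a::real_normed_vector)"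
proof -
  have "norm (u + v - w) \<le> norm (u + v) + norm w" by (rule norm_triangle_ineq4)
  also have "norm (u + v) \<le> norm u + norm v" by (rule norm_triangle_ineq)
  finally show ?thesis by simp
qed

lemma res_bl:
  assumes "z \<notin> spec J T"
  shows "bounded_linear (inv (shift_op J T z))" "\<And>x. inv (shift_op J T z) (J x) = J (inv (shift_op J T z) x)"
  using resolvent[OF assms] unfolding cbounded_def by auto

lemma res_norm_le:
  assumes "z \<notin> spec J T"
  shows "norm (inv (shift_op J T z) x) \<le> res_norm J T z * norm x"
  unfolding res_norm_def using onorm[OF res_bl(1)[OF assms]] .

lemma res_norm_nonneg:
  assumes "z \<notin> spec J T"
  shows "0 \<le> res_norm J T z"
  unfolding res_norm_def using onorm_pos_le[OF res_bl(1)[OF assms]] .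

lemma res_norm_lip:
  assumes "cbounded J T" "complex_structure J" "z \<notin> spec J T" "w \<notin> spec J T"
  shows "res_norm J T w \<le> res_norm J T z + cmod (w - z) * res_norm J T w * res_norm J T z"
proof -
  let ?R = "\<lambda>z. inv (shift_op J T z)" and ?r = "res_norm J T"
  have "norm (?R w x) \<le> (?r z + cmod (w - z) * ?r w * ?r z) * norm x" for x
  proof -
    have "?R w x = ?R z x + cscale J (w - z) (?R w (?R z x))"
      using res_id[OF assms, of x] by (simp add: algebra_simps)
    hence "norm (?R w x) \<le> norm (?R z x) + norm (cscale J (w - z) (?R w (?R z x)))"
      using norm_triangle_ineq by metis
    hence "norm (?R w x) \<le> norm (?R z x) + cmod (w - z) * norm (?R w (?R z x))"
      using norm_cscale[OF assms(2)] by simp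
    also have "norm (?R w (?R z x)) \<le> ?r w * (?r z * norm x)"
      using res_norm_le[OF assms(4), of "?R z x"] res_norm_le[OF assms(3), of x]
        res_norm_nonneg[OF assms(4)] by (meson mult_left_mono order_trans)
    finally show ?thesis
      using res_norm_le[OF assms(3), of x] 
      by (smt (verit, best) mult_left_mono norm_ge_zero distrib_right mult.assoc)
  qed
  moreover have "0 \<le> ?r z + cmod (w - z) * ?r w * ?r z"
    using res_norm_nonneg[OF assms(3)] res_norm_nonneg[OF assms(4)] by simp
  ultimately show ?thesis unfolding res_norm_def[of J T w] by (intro onorm_bound) (auto simp: res_norm_def)
qed

lemma res_norm_cont:
  assumes "cbounded J T" "complex_structure J"
  shows "continuous_on (- spec J T) (res_norm J T)"
  unfolding continuous_on_iff
proof (intro ballI allI impI)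
  fix z and e :: real
  assume z: "z \<in> - spec J T" and e: "0 < e"
  let ?r = "res_norm J T"
  define rz where "rz = ?r z"
  have rz0: "0 \<le> rz" using res_norm_nonneg z rz_def by auto
  define d where "d = min (1 / (2 * (rz + 1))) (e / (2 * (rz + 1)^2))"
  have d0: "0 < d" unfolding d_def using rz0 e by auto
  show "\<exists>d>0. \<forall>x'\<in>- spec J T. dist x' z < d \<longrightarrow> dist (?r x') (?r z) < e"
  proof (intro exI conjI ballI impI, fact d0)
    fix w assume w: "w \<in> - spec J T" and dw: "dist w z < d"
    define c where "c = cmod (w - z)"
    have c0: "0 \<le> c" and cd: "c < d" using dw by (auto simp: c_def dist_norm)
    define rw where "rw = ?r w"
    have rw0: "0 \<le> rw" using res_norm_nonneg w rw_def by auto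
    have l1: "rw \<le> rz + c * rw * rz"
      using res_norm_lip[OF assms, of z w] z w unfolding rw_def rz_def c_def by auto
    have l2: "rz \<le> rw + c * rz * rw"
      using res_norm_lip[OF assms, of w z] z w unfolding rw_def rz_def c_def
      by (auto simp: norm_minus_commute)
    have "c * (rz + 1) \<le> 1/2"
      using cd unfolding d_def using rz0
      by (auto simp: field_simps)
    hence crz: "c * rz \<le> 1/2" using c0 by (smt (verit) distrib_left mult_nonneg_nonneg)
    have "c * rw * rz \<le> rw / 2" using crz rw0
      by (metis mult.commute mult.left_commute mult_left_mono times_divide_eq_right mult.right_neutral)
    hence rw2: "rw \<le> 2 * rz" using l1 by simp
    have "c * rw * rz \<le> c * (2 * rz) * rz"
      using rw2 c0 rz0 by (intro mult_right_mono mult_left_mono) auto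
    also have "\<dots> = 2 * c * rz^2" by (simp add: power2_eq_square)
    also have "\<dots> \<le> 2 * c * (rz + 1)^2"
      using c0 rz0 by (intro mult_left_mono power_mono) auto
    also have "\<dots> < e"
    proof -
      have "c < e / (2 * (rz + 1)^2)" using cd unfolding d_def by auto
      thus ?thesis using rz0 by (simp add: field_simps)
    qed
    finally have "c * rw * rz < e" .
    hence "\<bar>rw - rz\<bar> < e" using l1 l2 by (auto simp: mult.commute mult.left_commute)
    thus "dist (?r w) (?r z) < e" unfolding rw_def rz_def dist_real_def .
  qed
qed

theorem theorem2p9:
  fixes J T :: "'a::{real_inner, complete_space} \<Rightarrow> 'a"
  assumes "complex_structure J"
    and "cbounded J T"
  shows "semiconvex_bound (- spec J T) (res_norm J T) (\<lambda>z. 2 * inverse (Psi J T z ^ 3))"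
proof -
  let ?R = "\<lambda>z. inv (shift_op J T z)" and ?r = "res_norm J T"
  let ?C = "\<lambda>z. 2 * inverse (Psi J T z ^ 3)"
  have Ceq: "?C z = 2 * ?r z ^ 3" for z
    by (simp add: Psi_def power_inverse)
  have cont: "continuous_on (- spec J T) ?r" by (rule res_norm_cont[OF assms(2,1)])
  have key: "2 * ?r m - ?r a - ?r b \<le> 2 * (cmod \<eta>)^2 * (?r a * ?r b * ?r m)"
    if m: "m \<notin> spec J T" and a: "a \<notin> spec J T" and b: "b \<notin> spec J T"
      and am: "a = m + \<eta>" and bm: "b = m - \<eta>" for m a b \<eta>
  proof -
    have cJ: "complex_structure J" and cT: "cbounded J T" using assms by auto
    have lin_cs: "cscale J c (u - v) = cscale J c u - cscale J c v" for c u v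
    proof -
      interpret J: linear J using csD(1)[OF cJ] .
      show ?thesis by (simp add: cscale_def J.diff algebra_simps)
    qed
    have neg_cs: "cscale J (- c) u = - cscale J c u" for c u
      by (simp add: cscale_def)
    have "norm (2 *\<^sub>R ?R m x) \<le> (?r a + ?r b + 2 * (cmod \<eta>)^2 * (?r a * ?r b * ?r m)) * norm x" for x
    proof -
      define y where "y = ?R m x"
      have e1: "?R a x - ?R m x = cscale J \<eta> (?R a y)"
        using res_id[OF cT cJ m a, of x] am unfolding y_def by simp
      have e2: "?R b x - ?R m x = - cscale J \<eta> (?R b y)"
        using res_id[OF cT cJ m b, of x] bm unfolding y_def by (simp add: neg_cs[symmetric])
      have e3: "?R a y - ?R b y = cscale J (2 * \<eta>) (?R a (?R b y))"
        using res_id[OF cT cJ b a, of y] am bm by simp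
      have "?R a x + ?R b x - 2 *\<^sub>R ?R m x = cscale J \<eta> (?R a y) - cscale J \<eta> (?R b y)"
        using e1 e2 by (simp add: algebra_simps scaleR_2)
      also have "\<dots> = cscale J \<eta> (cscale J (2 * \<eta>) (?R a (?R b y)))"
        using e3 lin_cs by metis
      finally have E: "2 *\<^sub>R ?R m x = ?R a x + ?R b x - cscale J \<eta> (cscale J (2 * \<eta>) (?R a (?R b y)))"
        by (simp add: algebra_simps)
      have n1: "norm (cscale J \<eta> (cscale J (2 * \<eta>) (?R a (?R b y)))) = 2 * (cmod \<eta>)^2 * norm (?R a (?R b y))"
        by (simp add: norm_cscale[OF cJ] norm_mult power2_eq_square)
      have n2: "norm (?R a (?R b y)) \<le> ?r a * ?r b * ?r m * norm x"
      proof -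
        have "norm (?R a (?R b y)) \<le> ?r a * norm (?R b y)" by (rule res_norm_le[OF a])
        also have "\<dots> \<le> ?r a * (?r b * norm y)"
          by (intro mult_left_mono res_norm_le[OF b] res_norm_nonneg[OF a])
        also have "\<dots> \<le> ?r a * (?r b * (?r m * norm x))"
          unfolding y_def
          by (intro mult_left_mono res_norm_le[OF m] res_norm_nonneg[OF a] res_norm_nonneg[OF b]
              mult_nonneg_nonneg)
        finally show ?thesis by (simp add: mult.assoc)
      qed
      have "norm (2 *\<^sub>R ?R m x) \<le> norm (?R a x) + norm (?R b x)
           + norm (cscale J \<eta> (cscale J (2 * \<eta>) (?R a (?R b y))))"
        unfolding E by (rule norm3)
      also have "\<dots> \<le> ?r a * norm x + ?r b * norm x + 2 * (cmod \<eta>)^2 * (?r a * ?r b * ?r m * norm x)"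
        unfolding n1
        by (intro add_mono res_norm_le[OF a] res_norm_le[OF b] mult_left_mono n2) auto
      finally show ?thesis by (simp add: algebra_simps)
    qed
    moreover have "0 \<le> ?r a + ?r b + 2 * (cmod \<eta>)^2 * (?r a * ?r b * ?r m)"
      using res_norm_nonneg[OF a] res_norm_nonneg[OF b] res_norm_nonneg[OF m] by simp
    ultimately have "onorm (\<lambda>x. 2 *\<^sub>R ?R m x) \<le> ?r a + ?r b + 2 * (cmod \<eta>)^2 * (?r a * ?r b * ?r m)"
      by (intro onorm_bound) auto
    moreover have "onorm (\<lambda>x. 2 *\<^sub>R ?R m x) = 2 * ?r m"
      unfolding res_norm_def using onorm_scaleR[OF res_bl(1)[OF m], of 2] by simp
    ultimately show ?thesis by simp
  qed
  show ?thesis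
    unfolding semiconvex_bound_def
  proof (intro conjI cont allI impI)
    fix B assume B: "compact B \<and> convex B \<and> B \<subseteq> - spec J T"
    show "semiconvex_const B ?r (Sup (?C ` B))"
      unfolding semiconvex_const_def
    proof (intro allI impI)
      fix \<mu> \<eta> assume seg: "closed_segment (\<mu> - \<eta>) (\<mu> + \<eta>) \<subseteq> B"
      have inB: "\<mu> + \<eta> \<in> B" "\<mu> - \<eta> \<in> B" "\<mu> \<in> B"
      proof -
        show "\<mu> + \<eta> \<in> B" "\<mu> - \<eta> \<in> B" using seg by auto
        have "midpoint (\<mu> - \<eta>) (\<mu> + \<eta>) = \<mu>" by (simp add: midpoint_def scaleR_2[symmetric])
        thus "\<mu> \<in> B" using seg midpoint_in_closed_segment[of "\<mu> - \<eta>" "\<mu> + \<eta>"] by auto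
      qed
      have cB: "continuous_on B ?C"
        unfolding Ceq using continuous_on_subset[OF cont] B
        by (intro continuous_intros) auto
      have bdd: "bdd_above (?C ` B)"
        using compact_continuous_image[OF cB] B by (auto intro: bounded_imp_bdd_above compact_imp_bounded)
      have le: "2 * ?r p ^ 3 \<le> Sup (?C ` B)" if "p \<in> B" for p
        using cSup_upper[OF _ bdd, of "?C p"] that Ceq by auto
      define ra rb rm where "ra = ?r (\<mu> + \<eta>)" and "rb = ?r (\<mu> - \<eta>)" and "rm = ?r \<mu>"
      have nn: "0 \<le> ra" "0 \<le> rb" "0 \<le> rm"
        using inB B res_norm_nonneg unfolding ra_def rb_def rm_def by blast+
      define k where "k = max ra (max rb rm)"
      have "ra * rb * rm \<le> k * k * k"
        unfolding k_def using nn by (intro mult_mono) auto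
      also have "\<dots> = k ^ 3" by (simp add: power3_eq_cube)
      also have "2 * \<dots> \<le> Sup (?C ` B)"
        unfolding k_def using le[OF inB(1)] le[OF inB(2)] le[OF inB(3)]
        unfolding ra_def rb_def rm_def by (auto simp: max_def)
      finally have kk: "2 * (ra * rb * rm) \<le> Sup (?C ` B)" by simp
      have "2 * rm - ra - rb \<le> 2 * (cmod \<eta>)^2 * (ra * rb * rm)"
        using key[of \<mu> "\<mu> + \<eta>" "\<mu> - \<eta>" \<eta>] inB B unfolding ra_def rb_def rm_def by auto
      also have "\<dots> = (cmod \<eta>)^2 * (2 * (ra * rb * rm))" by simp
      also have "\<dots> \<le> (cmod \<eta>)^2 * Sup (?C ` B)" using kk by (intro mult_left_mono) auto
      finally show "2 * ?r \<mu> - ?r (\<mu> + \<eta>) - ?r (\<mu> - \<eta>) \<le> Sup (?C ` B) * (cmod \<eta>)\<^sup>2"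
        unfolding ra_def rb_def rm_def by (simp add: mult.commute)
    qed
  qed
qed

end
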